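(* Let $G=(V,E,\{w_j\})$ be a reduced instance of the line highway problem with $[s,\ell]$-valuation, and let $r=s/\ell$. Let $\boldsymbol{\tau}$ be the (random) price vector output by the algorithm Line_Cut described in the context. Then \[ \frac{\mathrm{Opt}_{\rm coup}(G)}{\mathbf{E}[\mathrm{Profit}_{\rm coup}(\boldsymbol{\tau})]}\le 4(1-\ln r), \] where the expectation is over the random choices of the algorithm.
   Context: For integers $a\le b$, $[a,b]=\{a,a+1,\dots,b\}$. A reduced instance of the line highway problem is $G=(V,E,\{w_j\})$ with $V=[1,n]$ (items) and a finite multiset $E=\{e_1,\dots,e_m\}$ of customers, each $e_j=[j_s,j_t]$ with $1\le j_s\le j_t\le n$, having valuation $w_j>0$; valuations are integers. It has $[s,\ell]$-valuation if $s=\min_j w_j$ and $\ell=\max_j w_j$. For a price vector $\mathbf p\in\mathbb R^n$ (prices may be negative), $p(e_j)=\sum_{i\in e_j}p_i$, the coupon-model profit is $\mathrm{Profit}_{\rm coup}(\mathbf p)=\sum_{j:\,w_j\ge p(e_j)}\max\{p(e_j),0\}$, and $\mathrm{Opt}_{\rm coup}(G)=\max_{\mathbf p}\mathrm{Profit}_{\rm coup}(\mathbf p)$. The DAG representation of $G$ has vertices $u_0,\dots,u_n$ and, for each $e_j=[j_s,j_t]$, an arc $u_{j_s-1}\to u_{j_t}$ of weight $w_j$; a partial-sum vector $(s_0,\dots,s_n)$ determines prices $p_i=s_i-s_{i-1}$. Algorithm Line_Cut: construct the DAG representation; mark each vertex independently with probability $1/2$; let $L$ be the marked and $R$ the unmarked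 vertices; for each integer $x\in[s,\ell]$ assign partial sum $0$ to all vertices of $L$ and $x$ to all vertices of $R$, obtaining a price vector $\boldsymbol\tau_x$; output a $\boldsymbol\tau$ among $\boldsymbol\tau_s,\dots,\boldsymbol\tau_\ell$ maximizing $\mathrm{Profit}_{\rm coup}$. *)

theory Defs
  imports Complex_Main
begin

text \<open>A customer is a triple (j_s, j_t, w_j): the interval [j_s, j_t] of items and its
  integer valuation. An instance is given by the number of items n and the list
  (multiset) of customers.\<close>

type_synonym customer = "nat \<times> nat \<times> int"

definition reduced_instance :: "nat \<Rightarrow> customer list \<Rightarrow> bool" where
  "reduced_instance n E \<longleftrightarrow>
     (\<forall>(a, b, w) \<in> set E. 1 \<le> a \<and> a \<le> b \<and> b \<le> n \<and> w > 0)"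

definition min_val :: "customer list \<Rightarrow> int" where
  "min_val E = Min ((\<lambda>(a, b, w). w) ` set E)"

definition max_val :: "customer list \<Rightarrow> int" where
  "max_val E = Max ((\<lambda>(a, b, w). w) ` set E)"

definition bundle_price :: "(nat \<Rightarrow> real) \<Rightarrow> nat \<Rightarrow> nat \<Rightarrow> real" where
  "bundle_price p a b = (\<Sum>i\<in>{a..b}. p i)"

definition profit_coup :: "customer list \<Rightarrow> (nat \<Rightarrow> real) \<Rightarrow> real" where
  "profit_coup E p =
     (\<Sum>(a, b, w) \<leftarrow> E. if real_of_int w \<ge> bundle_price p a b
                          then max (bundle_price p a b) 0 else 0)"

definition opt_coup :: "nat \<Rightarrow> customer list \<Rightarrow> real" where
  "opt_coup n E = (SUP p \<in> {p :: nat \<Rightarrow> real. \<forall>i. i \<notin> {1..n} \<longrightarrow> p i = 0}. profit_coup E p)"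

text \<open>Price vector obtained from partial sums: vertices u_k with k in L get partial sum 0,
  the others get x; p_i = s_i - s_(i-1).\<close>
definition cut_prices :: "nat \<Rightarrow> nat set \<Rightarrow> int \<Rightarrow> nat \<Rightarrow> real" where
  "cut_prices n L x i =
     (if i \<in> {1..n} then
        (if i \<in> L then 0 else real_of_int x) - (if i - 1 \<in> L then 0 else real_of_int x)
      else 0)"

text \<open>Profit of the output of Line_Cut for a fixed marking L (the marked vertex indices).\<close>
definition line_cut_profit :: "nat \<Rightarrow> customer list \<Rightarrow> nat set \<Rightarrow> real" where
  "line_cut_profit n E L =
     Max ((\<lambda>x. profit_coup E (cut_prices n L x)) ` {min_val E .. max_val E})"

text \<open>Expectation over the uniformly random marking of u_0,...,u_n (each marked
  independently with probability 1/2).\<close>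
definition expected_line_cut_profit :: "nat \<Rightarrow> customer list \<Rightarrow> real" where
  "expected_line_cut_profit n E =
     (\<Sum>L\<in>Pow {0..n}. line_cut_profit n E L) / 2 ^ (n + 1)"

end

theory Submission
  imports Defs
begin

lemma bp_cut:
  assumes "1 \<le> a"
  shows "a \<le> k \<Longrightarrow> k \<le> n \<Longrightarrow> bundle_price (cut_prices n L x) a k =
     (if k \<in> L then 0 else real_of_int x) - (if a - 1 \<in> L then 0 else real_of_int x)"
proof (induction k)
  case 0
  then show ?case using assms by simp
next
  case (Suc k)
  show ?case
  proof (cases "Suc k = a")
    case True
    then have "bundle_price (cut_prices n L x) a (Suc k) = cut_prices n L x a"
      by (simp add: bundle_price_def)
    also have "\<dots> = (if a \<in> L then 0 else real_of_int x) - (if a - 1 \<in> L then 0 else real_of_int x)"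
      using Suc.prems True assms by (simp add: cut_prices_def)
    finally show ?thesis using True by simp
  next
    case False
    then have ak: "a \<le> k" using Suc.prems by simp
    have "bundle_price (cut_prices n L x) a (Suc k) =
          cut_prices n L x (Suc k) + bundle_price (cut_prices n L x) a k"
      unfolding bundle_price_def using ak
      by (simp add: atLeastAtMostSuc_conv add.commute)
    moreover have "cut_prices n L x (Suc k) = (if Suc k \<in> L then 0 else real_of_int x) - (if k \<in> L then 0 else real_of_int x)"
      using Suc.prems by (simp add: cut_prices_def)
    moreover note Suc.IH[OF ak] 
    ultimately show ?thesis using Suc.prems by simp
  qed
qed

lemma card_cut:
  assumes "finite A" "u \<in> A" "v \<in> A" "u \<noteq> v"
  shows "card {L\<in>Pow A. u\<in>L \<and> v\<notin>L} = 2^(card A - 2)"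
proof -
  have "bij_betw (\<lambda>K. insert u K) (Pow (A - {u,v})) {L\<in>Pow A. u\<in>L \<and> v\<notin>L}"
    by (rule bij_betw_byWitness[where f' = "\<lambda>L. L - {u}"]) (use assms in auto)
  then have "card {L\<in>Pow A. u\<in>L \<and> v\<notin>L} = card (Pow (A - {u,v}))"
    by (simp add: bij_betw_same_card)
  also have "\<dots> = 2 ^ card (A - {u,v})" using assms by (simp add: card_Pow)
  also have "card (A - {u,v}) = card A - 2"
    using assms by (subst card_Diff_subset) auto
  finally show ?thesis .
qed

lemma sum_cut:
  assumes "u \<le> n" "v \<le> n" "u \<noteq> v"
  shows "(\<Sum>L\<in>Pow {0..n}. if u\<in>L \<and> v\<notin>L then (c::real) else 0) = c * 2^(n - 1)"
proof -
  have "(\<Sum>L\<in>Pow {0..n}. if u\<in>L \<and> v\<notin>L then (c::real) else 0)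
      = (\<Sum>L\<in>{L\<in>Pow {0..n}. u\<in>L \<and> v\<notin>L}. c)"
    by (rule sum.inter_filter[symmetric]) simp
  also have "\<dots> = real (card {L\<in>Pow {0..n}. u\<in>L \<and> v\<notin>L}) * c" by simp
  also have "card {L\<in>Pow {0..n}. u\<in>L \<and> v\<notin>L} = 2^(n-1)"
    using card_cut[of "{0..n}" u v] assms by simp
  finally show ?thesis by simp
qed

lemma sum_swap_list:
  "(\<Sum>L\<in>A. \<Sum>c\<leftarrow>E. f c L) = (\<Sum>c\<leftarrow>E. \<Sum>L\<in>A. (f c L :: real))"
  by (induction E) (auto simp: sum.distrib)

lemma harm:
  fixes s l :: int
  assumes "1 \<le> s" "s \<le> l"
  shows "(\<Sum>k\<in>{s+1..l}. 1 / real_of_int k) \<le> ln (real_of_int l) - ln (real_of_int s)"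
  using assms(2)
proof (induction l rule: int_ge_induct)
  case base
  then show ?case by simp
next
  case (step i)
  have ins: "{s+1..i+1} = insert (i+1) {s+1..i}" using step.hyps by auto
  have ipos: "(0::real) < real_of_int i" using step.hyps assms by simp
  have "ln (real_of_int i / real_of_int (i+1)) \<le> real_of_int i / real_of_int (i+1) - 1"
    using ipos by (intro ln_le_minus_one) simp
  moreover have "ln (real_of_int i / real_of_int (i+1)) = ln (real_of_int i) - ln (real_of_int (i+1))"
    using ipos by (simp add: ln_div)
  moreover have "real_of_int i / real_of_int (i+1) - 1 = - (1 / real_of_int (i+1))"
    using ipos by (simp add: field_simps)
  ultimately have "1 / real_of_int (i+1) \<le> ln (real_of_int (i+1)) - ln (real_of_int i)" by linarith
  then show ?case using step.IH by (simp add: ins)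
qed

lemma w_as_sum:
  fixes w l :: int
  assumes "1 \<le> w" "w \<le> l"
  shows "real_of_int w = (\<Sum>k\<in>{1..l}. if k \<le> w then 1 else 0)"
proof -
  have "(\<Sum>k\<in>{1..l}. if k \<le> w then (1::real) else 0) = (\<Sum>k\<in>{k\<in>{1..l}. k \<le> w}. 1)"
    by (rule sum.inter_filter[symmetric]) simp
  also have "{k\<in>{1..l}. k \<le> w} = {1..w}" using assms by auto
  finally show ?thesis using assms by simp
qed

lemma term_lb:
  assumes "1 \<le> a" "a \<le> b" "b \<le> n" "0 < x"
  shows "(if real_of_int w \<ge> bundle_price (cut_prices n L x) a b
          then max (bundle_price (cut_prices n L x) a b) 0 else 0)
        \<ge> (if a - 1 \<in> L \<and> b \<notin> L then (if x \<le> w then real_of_int x else 0) else 0)"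
  using bp_cut[OF assms(1,2,3), of L x] assms(4) by auto

theorem theorem2:
  fixes n :: nat and E :: "customer list"
  assumes "reduced_instance n E"
    and "E \<noteq> []"
  shows "opt_coup n E / expected_line_cut_profit n E
           \<le> 4 * (1 - ln (real_of_int (min_val E) / real_of_int (max_val E)))"
proof -
  define s where "s = min_val E"
  define l where "l = max_val E"
  define ws where "ws = (\<lambda>(a, b, w). w) ` set E"
  have fin: "finite ws" "ws \<noteq> {}" using assms(2) by (auto simp: ws_def)
  have sin: "s \<in> ws" using Min_in[OF fin] by (simp add: s_def min_val_def ws_def)
  have hw: "\<And>a b w. (a, b, w) \<in> set E \<Longrightarrow> s \<le> w \<and> w \<le> l \<and> 1 \<le> a \<and> a \<le> b \<and> b \<le> n \<and> 0 < w"
  proof -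
    fix a b w assume m: "(a, b, w) \<in> set E"
    then have "w \<in> ws" by (force simp: ws_def)
    then have "s \<le> w" "w \<le> l" using fin
      by (auto simp: s_def l_def min_val_def max_val_def ws_def)
    then show "s \<le> w \<and> w \<le> l \<and> 1 \<le> a \<and> a \<le> b \<and> b \<le> n \<and> 0 < w"
      using m assms(1) unfolding reduced_instance_def by blast
  qed
  have s1: "1 \<le> s" using sin hw by (force simp: ws_def)
  have sl: "s \<le> l" using sin hw by (force simp: ws_def)
  obtain c0 where c0: "c0 \<in> set E" using assms(2) by (cases E) auto
  have n1: "1 \<le> n" using hw[of "fst c0" "fst (snd c0)" "snd (snd c0)"] c0 by auto
  define cnt where "cnt x = (\<Sum>(a, b, w)\<leftarrow>E. if x \<le> w then 1 else (0::real))" for x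
  define M where "M = Max ((\<lambda>x. real_of_int x * cnt x) ` {s..l})"
  have finM: "finite ((\<lambda>x. real_of_int x * cnt x) ` {s..l})" by simp
  have Mge: "\<And>x. x \<in> {s..l} \<Longrightarrow> real_of_int x * cnt x \<le> M"
    unfolding M_def by (rule Max_ge[OF finM]) simp
  have cnt_low: "cnt k = real (length E)" if "k \<le> s" for k
  proof -
    have eq: "map (\<lambda>(a, b, w). if k \<le> w then 1 else (0::real)) E = map (\<lambda>_. 1) E"
      using hw that by (auto intro!: map_cong split: prod.splits) (smt (verit))
    then have "cnt k = (\<Sum>x\<leftarrow>E. (1::real))" unfolding cnt_def by (simp only: eq)
    then show ?thesis by (simp add: sum_list_triv)
  qed
  have Mpos: "0 < M"
  proof -
    have "real_of_int s * cnt s \<le> M" using Mge sl by simp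
    moreover have c1: "cnt s \<ge> 1" using cnt_low[of s] assms(2) by (cases E) auto
    moreover have "1 \<le> real_of_int s" using s1 by simp
    then have "1 * 1 \<le> real_of_int s * cnt s" using c1 by (intro mult_mono) auto
    ultimately show ?thesis by linarith
  qed
  define SW where "SW = (\<Sum>(a, b, w)\<leftarrow>E. real_of_int w)"
  have prof_le: "profit_coup E p \<le> SW" for p
    unfolding profit_coup_def SW_def
  proof (rule sum_list_mono)
    fix c assume c: "c \<in> set E"
    obtain a b w where cc: "c = (a, b, w)" by (metis prod.exhaust)
    have "0 < w" using hw c cc by blast
    then show "(case c of (a, b, w) \<Rightarrow> if bundle_price p a b \<le> real_of_int w
          then max (bundle_price p a b) 0 else 0) \<le> (case c of (a, b, w) \<Rightarrow> real_of_int w)"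
      using cc by auto
  qed
  have opt_le: "opt_coup n E \<le> SW"
    unfolding opt_coup_def
    by (rule cSUP_least) (use prof_le in auto)
  have "SW = (\<Sum>c\<leftarrow>E. \<Sum>k\<in>{1..l}. (case c of (a, b, w) \<Rightarrow> if k \<le> w then 1 else (0::real)))"
    unfolding SW_def
  proof (rule arg_cong[where f = sum_list], rule map_cong[OF refl])
    fix c assume "c \<in> set E"
    then show "(case c of (a, b, w) \<Rightarrow> real_of_int w) =
        (\<Sum>k\<in>{1..l}. case c of (a, b, w) \<Rightarrow> if k \<le> w then 1 else 0)"
    proof -
      obtain a b w where cc: "c = (a, b, w)" by (metis prod.exhaust)
      have "1 \<le> w" "w \<le> l" using hw \<open>c \<in> set E\<close> cc s1 by force+
      then show ?thesis using cc w_as_sum by simp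
    qed
  qed
  also have "\<dots> = (\<Sum>k\<in>{1..l}. cnt k)"
    unfolding cnt_def
    using sum_swap_list[where A="{1..l}" and f="\<lambda>c k. case c of (a, b, w) \<Rightarrow> if k \<le> w then 1 else (0::real)" and E=E]
    by (simp add: case_prod_unfold)
  also have "\<dots> = (\<Sum>k\<in>{1..s}. cnt k) + (\<Sum>k\<in>{s+1..l}. cnt k)"
    using sl s1 by (subst sum.union_disjoint[symmetric]) (auto intro!: sum.cong)
  also have "(\<Sum>k\<in>{1..s}. cnt k) = real_of_int s * real (length E)"
    using s1 cnt_low by simp
  also have "real_of_int s * real (length E) \<le> M"
    using Mge[of s] cnt_low[of s] sl by simp
  also have "(\<Sum>k\<in>{s+1..l}. cnt k) \<le> (\<Sum>k\<in>{s+1..l}. M * (1 / real_of_int k))"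
  proof (rule sum_mono)
    fix k assume k: "k \<in> {s+1..l}"
    then have "real_of_int k * cnt k \<le> M" using Mge by simp
    moreover have "0 < real_of_int k" using k s1 by simp
    ultimately show "cnt k \<le> M * (1 / real_of_int k)"
      by (simp add: field_simps mult.commute)
  qed
  also have "\<dots> = M * (\<Sum>k\<in>{s+1..l}. 1 / real_of_int k)" by (simp add: sum_distrib_left)
  also have "\<dots> \<le> M * (ln (real_of_int l) - ln (real_of_int s))"
    using harm[OF s1 sl] Mpos by simp
  finally have SW_le: "SW \<le> M * (1 - ln (real_of_int s / real_of_int l))"
    using s1 sl by (simp add: ln_div algebra_simps)
  obtain x0 where x0: "x0 \<in> {s..l}" "M = real_of_int x0 * cnt x0"
  proof -
    have "M \<in> (\<lambda>x. real_of_int x * cnt x) ` {s..l}"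
      unfolding M_def by (rule Max_in[OF finM]) (use sl in auto)
    then show ?thesis using that by blast
  qed
  have x0pos: "0 < x0" using x0 s1 by simp
  define g where "g c L = (case c of (a, b, w) \<Rightarrow>
     if real_of_int w \<ge> bundle_price (cut_prices n L x0) a b
     then max (bundle_price (cut_prices n L x0) a b) 0 else 0)" for c L
  have "(\<Sum>L\<in>Pow {0..n}. line_cut_profit n E L) \<ge> (\<Sum>L\<in>Pow {0..n}. profit_coup E (cut_prices n L x0))"
  proof (rule sum_mono)
    fix L show "profit_coup E (cut_prices n L x0) \<le> line_cut_profit n E L"
      unfolding line_cut_profit_def using x0(1)
      by (intro Max_ge) (auto simp: s_def l_def)
  qed
  moreover have "(\<Sum>L\<in>Pow {0..n}. profit_coup E (cut_prices n L x0)) = (\<Sum>L\<in>Pow {0..n}. \<Sum>c\<leftarrow>E. g c L)"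
    unfolding profit_coup_def g_def by (simp add: case_prod_unfold)
  moreover have "\<dots> = (\<Sum>c\<leftarrow>E. \<Sum>L\<in>Pow {0..n}. g c L)" by (rule sum_swap_list)
  moreover have "\<dots> \<ge> (\<Sum>c\<leftarrow>E. real_of_int x0 * 2^(n-1) * (case c of (a, b, w) \<Rightarrow> if x0 \<le> w then 1 else 0))"
  proof (rule sum_list_mono)
    fix c assume c: "c \<in> set E"
    obtain a b w where cc: "c = (a, b, w)" by (cases c)
    have h: "1 \<le> a" "a \<le> b" "b \<le> n" using hw c cc by auto
    have "(\<Sum>L\<in>Pow {0..n}. g c L) \<ge> (\<Sum>L\<in>Pow {0..n}. if a - 1 \<in> L \<and> b \<notin> L then (if x0 \<le> w then real_of_int x0 else 0) else 0)"
      unfolding g_def cc using term_lb[OF h x0pos] by (intro sum_mono) simp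
    moreover have "(\<Sum>L\<in>Pow {0..n}. if a - 1 \<in> L \<and> b \<notin> L then (if x0 \<le> w then real_of_int x0 else 0) else 0)
       = (if x0 \<le> w then real_of_int x0 else 0) * 2^(n-1)"
      using h by (intro sum_cut) auto
    ultimately show "real_of_int x0 * 2^(n-1) * (case c of (a, b, w) \<Rightarrow> if x0 \<le> w then 1 else 0) \<le> (\<Sum>L\<in>Pow {0..n}. g c L)"
      using cc by (cases "x0 \<le> w") auto
  qed
  moreover have "(\<Sum>c\<leftarrow>E. real_of_int x0 * 2^(n-1) * (case c of (a, b, w) \<Rightarrow> if x0 \<le> w then 1 else (0::real)))
      = real_of_int x0 * 2^(n-1) * cnt x0"
    unfolding cnt_def by (simp add: sum_list_const_mult case_prod_unfold)
  ultimately have "(\<Sum>L\<in>Pow {0..n}. line_cut_profit n E L) \<ge> real_of_int x0 * 2^(n-1) * cnt x0"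
    by linarith
  then have sumL: "(\<Sum>L\<in>Pow {0..n}. line_cut_profit n E L) \<ge> 2^(n-1) * M"
    using x0(2) by (simp add: mult_ac)
  have p2: "(2::real)^(n+1) = 4 * 2^(n-1)"
  proof -
    have "n + 1 = Suc (Suc (n - 1))" using n1 by simp
    then show ?thesis by (simp only: power_Suc)
  qed
  have Exp: "expected_line_cut_profit n E \<ge> M / 4"
    unfolding expected_line_cut_profit_def p2
    using sumL by (simp add: field_simps)
  have R1: "1 \<le> 1 - ln (real_of_int s / real_of_int l)"
    using s1 sl by (simp add: ln_le_zero_iff divide_le_eq_1)
  have "opt_coup n E / expected_line_cut_profit n E \<le> M * (1 - ln (real_of_int s / real_of_int l)) / expected_line_cut_profit n E"
    using opt_le SW_le Exp Mpos by (intro divide_right_mono) auto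
  also have "\<dots> \<le> M * (1 - ln (real_of_int s / real_of_int l)) / (M / 4)"
    using Exp Mpos R1 by (intro divide_left_mono) auto
  also have "\<dots> = 4 * (1 - ln (real_of_int s / real_of_int l))" using Mpos by simp
  finally show ?thesis by (simp add: s_def l_def)
qed

end
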